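(* Let $(\Omega,T)$ be a minimal subshift over a finite alphabet $A$ such that no word in $L_5(\Omega)$ has repeated letters. Let $w=w_0\cdots w_{n-1}\in A^n$ with $n\geq4$. Then $w\in L(\Omega)$ if and only if $$\sigma_{[.w_0w_1]}\ast\Big(\sigma_{[.w_1w_2]}\ast\cdots\ast\big(\sigma_{[.w_{n-4}w_{n-3}]}\ast\sigma_{[w_{n-3}.w_{n-2}w_{n-1}]}\big)\cdots\Big)\neq 1\ \text{ in } G_T'.$$
   Context: $T$ is the left shift $(T\omega)_m=\omega_{m+1}$ on $A^{\mathbb Z}$; a minimal subshift is a closed shift-invariant $\Omega\subseteq A^{\mathbb Z}$ with every orbit dense. Words are indexed from $0$; $L_m(\Omega)$ is the set of words of length $m$ occurring in sequences of $\Omega$, $L(\Omega)=\bigcup_mL_m(\Omega)$. For words $u,v$ over $A$ (either may be empty), $[u.v]=\{\omega\in\Omega:\omega_{-i}=u_{|u|-i}\ (1\leq i\leq|u|),\ \omega_i=v_i\ (0\leq i\leq|v|-1)\}$ (possibly empty). For a clopen $U$ with $U,TU,T^2U$ pairwise disjoint, $\sigma_U(\omega)=T\omega$ on $U\cup TU$, $\sigma_U(\omega)=T^{-2}\omega$ on $T^2U$, $\sigma_U(\omega)=\omega$ elsewhere; $\sigma_\emptyset=1$. $G_T$ is the group of homeomorphisms $S$ of $\Omega$ with $S(x)=T^{f_S(x)}x$ for a continuous $f_S:\Omega\to\mathbb Z$; $G_T'$ its commutator subgroup. For group elements $r,s$, $r\ast s:=s\,r^{-1}s^{-1}r$. *)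

theory Defs
  imports "HOL-Analysis.Analysis"
begin

definition shift_top :: "(int \<Rightarrow> 'a) topology" where
  "shift_top = product_topology (\<lambda>_. discrete_topology UNIV) UNIV"

definition shift :: "(int \<Rightarrow> 'a) \<Rightarrow> (int \<Rightarrow> 'a)" where
  "shift \<omega> = (\<lambda>m. \<omega> (m + 1))"

definition shiftn :: "int \<Rightarrow> (int \<Rightarrow> 'a) \<Rightarrow> (int \<Rightarrow> 'a)" where
  "shiftn k \<omega> = (\<lambda>m. \<omega> (m + k))"

definition minimal_subshift :: "(int \<Rightarrow> 'a) set \<Rightarrow> bool" where
  "minimal_subshift \<Omega> \<longleftrightarrow>
     closedin shift_top \<Omega> \<and> shift ` \<Omega> = \<Omega> \<and>
     (\<forall>\<omega>\<in>\<Omega>. shift_top closure_of (range (\<lambda>k::int. shiftn k \<omega>)) = \<Omega>)"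

definition lang :: "(int \<Rightarrow> 'a) set \<Rightarrow> 'a list set" where
  "lang \<Omega> = {w. \<exists>\<omega>\<in>\<Omega>. \<exists>k::int. \<forall>i<length w. \<omega> (k + int i) = w ! i}"

definition cyl :: "(int \<Rightarrow> 'a) set \<Rightarrow> 'a list \<Rightarrow> 'a list \<Rightarrow> (int \<Rightarrow> 'a) set" where
  "cyl \<Omega> u v = {\<omega>\<in>\<Omega>.
     (\<forall>i. 1 \<le> i \<and> i \<le> length u \<longrightarrow> \<omega> (- int i) = u ! (length u - i)) \<and>
     (\<forall>i<length v. \<omega> (int i) = v ! i)}"

definition sigma :: "(int \<Rightarrow> 'a) set \<Rightarrow> (int \<Rightarrow> 'a) \<Rightarrow> (int \<Rightarrow> 'a)" where
  "sigma U \<omega> = (if \<omega> \<in> U \<union> shift ` U then shift \<omega>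
                else if \<omega> \<in> shift ` shift ` U then shiftn (-2) \<omega> else \<omega>)"

text \<open>\<open>r \<ast> s = s r\<^sup>-\<^sup>1 s\<^sup>-\<^sup>1 r\<close> in the group of homeomorphisms of \<open>\<Omega>\<close>
  (composition = function composition, \<open>r\<close> applied first; maps are taken as
  the identity outside \<open>\<Omega>\<close>).\<close>
definition gstar :: "(int \<Rightarrow> 'a) set \<Rightarrow> ((int \<Rightarrow> 'a) \<Rightarrow> (int \<Rightarrow> 'a))
     \<Rightarrow> ((int \<Rightarrow> 'a) \<Rightarrow> (int \<Rightarrow> 'a)) \<Rightarrow> ((int \<Rightarrow> 'a) \<Rightarrow> (int \<Rightarrow> 'a))" where
  "gstar \<Omega> r s = (\<lambda>x. if x \<in> \<Omega> then s (inv_into \<Omega> r (inv_into \<Omega> s (r x))) else x)"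

definition nested_comm :: "(int \<Rightarrow> 'a) set \<Rightarrow> 'a list \<Rightarrow> ((int \<Rightarrow> 'a) \<Rightarrow> (int \<Rightarrow> 'a))" where
  "nested_comm \<Omega> w =
     (let n = length w in
      foldr (\<lambda>i acc. gstar \<Omega> (sigma (cyl \<Omega> [] [w ! i, w ! (i + 1)])) acc)
            [0..<n - 3]
            (sigma (cyl \<Omega> [w ! (n - 3)] [w ! (n - 2), w ! (n - 1)])))"

end

theory Submission
  imports Defs
begin


definition gpos :: "(int \<Rightarrow> bool) \<Rightarrow> int \<Rightarrow> int" where
 "gpos P k = (if P k \<or> P (k-1) then k+1 else if P (k-2) then k-2 else k)"

lemma gpos3:
  assumes "\<And>i j. P i \<Longrightarrow> P j \<Longrightarrow> i \<noteq> j \<Longrightarrow> \<bar>i-j\<bar> \<ge> 3"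
  shows "gpos P (gpos P (gpos P k)) = k"
proof -
  have s: "P i \<Longrightarrow> P j \<Longrightarrow> \<bar>i-j\<bar> < 3 \<Longrightarrow> i = j" for i j using assms by force
  show ?thesis
  proof (cases "P k")
    case True
    then show ?thesis using s[of k "k+1"] s[of k "k-1"] s[of k "k+2"] s[of k "k-2"]  s[of k "k-1"]
      by (auto simp: gpos_def algebra_simps)
  next
    case F1: False
    show ?thesis
    proof (cases "P (k-1)")
      case True
      then show ?thesis using F1 s[of "k-1" "k+1"] s[of "k-1" "k"] s[of "k-1" "k-2"] s[of "k-1" "k-3"]
        by (auto simp: gpos_def algebra_simps)
    next
      case F2: False
      show ?thesis
      proof (cases "P (k-2)")
        case True
        then show ?thesis using F1 F2 s[of "k-2" "k-3"] s[of "k-2" "k-4"] s[of "k-2" "k-1"]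
          by (auto simp: gpos_def algebra_simps)
      next
        case False
        then show ?thesis using F1 F2 by (auto simp: gpos_def algebra_simps)
      qed
    qed
  qed
qed


locale seps =
  fixes A B :: "int \<Rightarrow> bool"
  assumes sA: "\<And>i j. A i \<Longrightarrow> A j \<Longrightarrow> i \<noteq> j \<Longrightarrow> \<bar>i-j\<bar> \<ge> 5"
    and sB: "\<And>i j. B i \<Longrightarrow> B j \<Longrightarrow> i \<noteq> j \<Longrightarrow> \<bar>i-j\<bar> \<ge> 5"
    and sAB: "\<And>i j. A i \<Longrightarrow> B j \<Longrightarrow> j \<noteq> i+2 \<Longrightarrow> \<bar>j-i-2\<bar> \<ge> 5"
begin

lemma nA: "A i \<Longrightarrow> d \<noteq> 0 \<Longrightarrow> \<bar>d\<bar> < 5 \<Longrightarrow> \<not> A (i + d)"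
  using sA[of i "i+d"] by auto
lemma nB: "B i \<Longrightarrow> d \<noteq> 0 \<Longrightarrow> \<bar>d\<bar> < 5 \<Longrightarrow> \<not> B (i + d)"
  using sB[of i "i+d"] by auto
lemma nAB: "A i \<Longrightarrow> d \<noteq> 2 \<Longrightarrow> \<bar>d - 2\<bar> < 5 \<Longrightarrow> \<not> B (i + d)"
  using sAB[of i "i+d"] by auto
lemma nBA: "B j \<Longrightarrow> d \<noteq> -2 \<Longrightarrow> \<bar>d + 2\<bar> < 5 \<Longrightarrow> \<not> A (j + d)"
  using sAB[of "j+d" j] by auto

definition "Pp j \<longleftrightarrow> A (j-1) \<and> B (j+1)"

abbreviation "F k \<equiv> gpos B (gpos A (gpos A (gpos B (gpos B (gpos A k)))))"

lemma case1:
  assumes "A i" "B (i+2)" "d \<in> {0..4}"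
  shows "F (i+d) = gpos Pp (i+d)"
proof -
  note f = assms(1,2) nA[OF assms(1), of 1] nA[OF assms(1), of 2] nA[OF assms(1), of 3] nA[OF assms(1), of 4]
    nA[OF assms(1), of "-1"] nA[OF assms(1), of "-2"] nA[OF assms(1), of "-3"] nA[OF assms(1), of "-4"]
    nAB[OF assms(1), of 3] nAB[OF assms(1), of 4] nAB[OF assms(1), of 5] nAB[OF assms(1), of 6]
    nAB[OF assms(1), of 1] nAB[OF assms(1), of 0] nAB[OF assms(1), of "-1"] nAB[OF assms(1), of "-2"]
  have "d = 0 \<or> d = 1 \<or> d = 2 \<or> d = 3 \<or> d = 4" using assms(3) by auto
  then show ?thesis using f by (elim disjE; simp add: gpos_def Pp_def algebra_simps)
qed

lemma case2:
  assumes "A i" "\<not> B (i+2)" "d \<in> {0..2}"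
  shows "F (i+d) = gpos Pp (i+d)"
proof -
  note f = assms(1,2) nA[OF assms(1), of 1] nA[OF assms(1), of 2] nA[OF assms(1), of 3] nA[OF assms(1), of 4]
    nA[OF assms(1), of "-1"] nA[OF assms(1), of "-2"] nA[OF assms(1), of "-3"] nA[OF assms(1), of "-4"]
    nAB[OF assms(1), of 3] nAB[OF assms(1), of 4] nAB[OF assms(1), of 5] nAB[OF assms(1), of 6]
    nAB[OF assms(1), of 1] nAB[OF assms(1), of 0] nAB[OF assms(1), of "-1"] nAB[OF assms(1), of "-2"]
  have "d = 0 \<or> d = 1 \<or> d = 2" using assms(3) by auto
  then show ?thesis using f by (elim disjE; simp add: gpos_def Pp_def algebra_simps)
qed

lemma case3:
  assumes "B j" "\<not> A (j-2)" "d \<in> {0..2}"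
  shows "F (j+d) = gpos Pp (j+d)"
proof -
  note f = assms(1,2) nB[OF assms(1), of 1] nB[OF assms(1), of 2] nB[OF assms(1), of 3] nB[OF assms(1), of 4]
    nB[OF assms(1), of "-1"] nB[OF assms(1), of "-2"] nB[OF assms(1), of "-3"] nB[OF assms(1), of "-4"]
    nBA[OF assms(1), of 0] nBA[OF assms(1), of 1] nBA[OF assms(1), of 2] nBA[OF assms(1), of "-1"]
    nBA[OF assms(1), of "-3"] nBA[OF assms(1), of "-4"] nBA[OF assms(1), of "-5"] nBA[OF assms(1), of "-6"]
  have "d = 0 \<or> d = 1 \<or> d = 2" using assms(3) by auto
  then show ?thesis using f by (elim disjE; simp add: gpos_def Pp_def algebra_simps)
qed

lemma comm: "F k = gpos Pp k"
proof -
  consider (a) i where "A i" "i \<in> {k-2..k}" | (b) j where "B j" "j \<in> {k-2..k}" "\<not>(\<exists>i\<in>{k-2..k}. A i)"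
    | (c) "\<forall>i\<in>{k-2..k}. \<not> A i \<and> \<not> B i" by blast
  then show ?thesis
  proof cases
    case a
    then have k: "k = i + (k - i)" "k - i \<in> {0..2}" by auto
    show ?thesis
    proof (cases "B (i+2)")
      case True
      then show ?thesis using case1[OF a(1) True, of "k-i"] k by auto
    next
      case False
      then show ?thesis using case2[OF a(1) False, of "k-i"] k by auto
    qed
  next
    case b
    then have k: "k = j + (k - j)" "k - j \<in> {0..2}" by auto
    show ?thesis
    proof (cases "A (j-2)")
      case True
      then have "B (j - 2 + 2)" using b by simp
      then show ?thesis using case1[OF True, of "k-(j-2)"] k by auto
    next
      case False
      then show ?thesis using case3[OF b(1) False, of "k-j"] k by auto
    qed
  next
    case c
    then have "\<not> A k" "\<not> A (k-1)" "\<not> A (k-2)" "\<not> B k" "\<not> B (k-1)" "\<not> B (k-2)" by auto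
    then show ?thesis by (auto simp: gpos_def Pp_def algebra_simps)
  qed
qed
end

lemma shiftn_shiftn[simp]: "shiftn a (shiftn b x) = shiftn (a+b) x"
  by (rule ext) (simp add: shiftn_def algebra_simps)
lemma shift_shiftn[simp]: "shift (shiftn k x) = shiftn (k+1) x"
  by (rule ext) (simp add: shift_def shiftn_def algebra_simps)
lemma shiftn0[simp]: "shiftn 0 x = x"
  by (rule ext) (simp add: shiftn_def)

lemma mem_shift_img: "shiftn k x \<in> shift ` U \<longleftrightarrow> shiftn (k-1) x \<in> U"
proof
  assume "shiftn k x \<in> shift ` U"
  then obtain y where y: "y \<in> U" "shiftn k x = shift y" by auto
  have "y = shiftn (k-1) x"
  proof (rule ext)
    fix m
    have "shiftn k x (m-1) = shift y (m-1)" using y(2) by simp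
    then show "y m = shiftn (k-1) x m" by (simp add: shift_def shiftn_def algebra_simps)
  qed
  then show "shiftn (k-1) x \<in> U" using y by simp
next
  assume "shiftn (k-1) x \<in> U"
  then have "shift (shiftn (k-1) x) \<in> shift ` U" by blast
  then show "shiftn k x \<in> shift ` U" by simp
qed

lemma mem_shift_img2: "shiftn k x \<in> shift ` shift ` U \<longleftrightarrow> shiftn (k-2) x \<in> U"
  using mem_shift_img[of k x "shift ` U"] mem_shift_img[of "k-1" x U] by simp

lemma sigma_shiftn: "sigma U (shiftn k x) = shiftn (gpos (\<lambda>j. shiftn j x \<in> U) k) x"
  by (simp add: sigma_def gpos_def mem_shift_img mem_shift_img2 shift_shiftn)

lemma sigma_pos: "sigma U x = shiftn (gpos (\<lambda>j. shiftn j x \<in> U) 0) x"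
  using sigma_shiftn[of U 0 x] by simp

lemma shiftn_in:
  assumes "shift ` \<Omega> = \<Omega>" "x \<in> \<Omega>"
  shows "shiftn k x \<in> \<Omega>"
proof -
  have up: "y \<in> \<Omega> \<Longrightarrow> shiftn (i+1) y \<in> \<Omega>" if "shiftn i y \<in> \<Omega>" for i y
    using that assms(1) shift_shiftn[of i y] by (metis imageI)
  have down: "shiftn (i-1) y \<in> \<Omega>" if "shiftn i y \<in> \<Omega>" for i y
  proof -
    from that assms(1) obtain z where z: "z \<in> \<Omega>" "shiftn i y = shift z" by (metis imageE)
    have "shiftn (i-1) y = z"
    proof (rule ext)
      fix m
      have "shiftn i y (m-1) = shift z (m-1)" using z(2) by simp
      then show "shiftn (i-1) y m = z m" by (simp add: shift_def shiftn_def algebra_simps)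
    qed
    then show ?thesis using z by simp
  qed
  have "shiftn 0 x \<in> \<Omega>" using assms(2) by simp
  then show ?thesis
    by (induction k rule: int_induct[where k=0]) (auto intro: up[OF _ assms(2)] down)
qed

lemma cyl_mem:
  "shiftn j y \<in> cyl \<Omega> [c] v \<longleftrightarrow> shiftn j y \<in> \<Omega> \<and> y (j-1) = c \<and> (\<forall>i<length v. y (j + int i) = v!i)"
proof -
  have e: "(\<forall>i::nat. Suc 0 \<le> i \<and> i \<le> Suc 0 \<longrightarrow> P i) \<longleftrightarrow> P (Suc 0)" for P
    by (metis le_antisym order_refl)
  show ?thesis unfolding cyl_def by (simp add: e shiftn_def algebra_simps)
qed

lemma cyl_mem0:
  "shiftn j y \<in> cyl \<Omega> [] [a,b] \<longleftrightarrow> shiftn j y \<in> \<Omega> \<and> y j = a \<and> y (j+1) = b"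
proof -
  have e: "(\<forall>i<Suc (Suc 0). P i) \<longleftrightarrow> P 0 \<and> P (Suc 0)" for P
    by (auto simp: less_Suc_eq)
  show ?thesis unfolding cyl_def by (simp add: e shiftn_def algebra_simps)
qed

lemma match_Cons: "(\<forall>i<length (b#l). f i = (b#l)!i) \<longleftrightarrow> f 0 = b \<and> (\<forall>i<length l. f (Suc i) = l!i)"
  by (auto simp: less_Suc_eq_0_disj)


lemma dist_lemma:
  assumes "\<forall>u\<in>lang \<Omega>. length u = 5 \<longrightarrow> distinct u" "x \<in> \<Omega>" "x p = x q" "\<bar>p - q\<bar> \<le> 4"
  shows "p = q"
proof -
  have *: False if pq: "p < q" "q - p \<le> 4" "x p = x q" for p q
  proof -
    let ?u = "map (\<lambda>i. x (p + int i)) [0..<5]"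
    have "?u \<in> lang \<Omega>" unfolding lang_def using assms(2) by (auto intro!: bexI[of _ x] exI[of _ p])
    hence "distinct ?u" using assms(1) by auto
    hence inj: "inj_on (\<lambda>i. x (p + int i)) {0..<5}" by (simp add: distinct_map)
    have "nat (q-p) \<in> {0..<5}" using pq by auto
    moreover have eq: "(\<lambda>i. x (p + int i)) 0 = (\<lambda>i. x (p + int i)) (nat (q-p))" using pq by simp
    ultimately have "0 = nat (q-p)" using inj_onD[OF inj eq] by auto
    thus False using pq by simp
  qed
  show ?thesis
  proof (cases p q rule: linorder_cases)
    case less then show ?thesis using *[of p q] assms(3,4) by auto
  next
    case greater then show ?thesis using *[of q p] assms(3,4) by auto
  qed simp
qed

lemma sig3:
  assumes inv: "shift ` \<Omega> = \<Omega>"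
    and sep0: "\<forall>z\<in>\<Omega>. \<forall>i j. shiftn i z \<in> U \<longrightarrow> shiftn j z \<in> U \<longrightarrow> i \<noteq> j \<longrightarrow> \<bar>i-j\<bar> \<ge> 3"
  shows "z \<in> \<Omega> \<Longrightarrow> sigma U z \<in> \<Omega>"
    and "z \<in> \<Omega> \<Longrightarrow> sigma U (sigma U (sigma U z)) = z"
    and "z \<in> \<Omega> \<Longrightarrow> inv_into \<Omega> (sigma U) z = sigma U (sigma U z)"
proof -
  have sh: "\<And>z k. z \<in> \<Omega> \<Longrightarrow> shiftn k z \<in> \<Omega>" using shiftn_in[OF inv] by blast
  note sep = sep0[rule_format]
  show m: "sigma U z \<in> \<Omega>" if "z \<in> \<Omega>" for z using sigma_pos[of U z] sh[OF that] by simp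
  show c: "sigma U (sigma U (sigma U z)) = z" if z: "z \<in> \<Omega>" for z
  proof -
    have "sigma U (sigma U (sigma U z)) = shiftn (gpos (\<lambda>j. shiftn j z \<in> U) (gpos (\<lambda>j. shiftn j z \<in> U) (gpos (\<lambda>j. shiftn j z \<in> U) 0))) z"
      by (simp add: sigma_pos[of U z] sigma_shiftn)
    also have "\<dots> = z" by (subst gpos3) (auto intro: sep[OF z])
    finally show ?thesis .
  qed
  show "inv_into \<Omega> (sigma U) z = sigma U (sigma U z)" if z: "z \<in> \<Omega>"
  proof (rule inv_into_f_eq)
    show "inj_on (sigma U) \<Omega>"
    proof (rule inj_onI)
      fix u v assume "u \<in> \<Omega>" "v \<in> \<Omega>" "sigma U u = sigma U v"
      then show "u = v" using c[of u] c[of v] by metis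
    qed
    show "sigma U (sigma U z) \<in> \<Omega>" using m z by blast
    show "sigma U (sigma U (sigma U z)) = z" using c z by blast
  qed
qed

lemma key:
  assumes inv: "shift ` \<Omega> = \<Omega>"
    and dist: "\<And>x p q. x \<in> \<Omega> \<Longrightarrow> x p = x q \<Longrightarrow> \<bar>p-q\<bar> \<le> 4 \<Longrightarrow> p = q"
  shows "gstar \<Omega> (sigma (cyl \<Omega> [] [a,b])) (sigma (cyl \<Omega> [b] cv)) = sigma (cyl \<Omega> [a] (b#cv))"
proof (rule ext)
  fix y
  have sh: "\<And>z k. z \<in> \<Omega> \<Longrightarrow> shiftn k z \<in> \<Omega>" using shiftn_in[OF inv] by blast
  show "gstar \<Omega> (sigma (cyl \<Omega> [] [a,b])) (sigma (cyl \<Omega> [b] cv)) y = sigma (cyl \<Omega> [a] (b#cv)) y"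
  proof (cases "y \<in> \<Omega>")
    case False
    have "cyl \<Omega> [a] (b#cv) \<subseteq> \<Omega>" by (auto simp: cyl_def)
    hence "y \<notin> cyl \<Omega> [a] (b#cv) \<union> shift ` cyl \<Omega> [a] (b#cv)" "y \<notin> shift ` shift ` cyl \<Omega> [a] (b#cv)"
      using False inv by blast+
    then show ?thesis by (simp add: gstar_def sigma_def False)
  next
    case True
    have sepR: "\<bar>i-j\<bar> \<ge> 3" if "z \<in> \<Omega>" "shiftn i z \<in> cyl \<Omega> [] [a,b]" "shiftn j z \<in> cyl \<Omega> [] [a,b]" "i \<noteq> j" for z i j
      using that dist[of z i j] by (force simp: cyl_mem0)
    have sepS: "\<bar>i-j\<bar> \<ge> 3" if "z \<in> \<Omega>" "shiftn i z \<in> cyl \<Omega> [b] cv" "shiftn j z \<in> cyl \<Omega> [b] cv" "i \<noteq> j" for z i j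
      using that dist[of z "i-1" "j-1"] by (force simp: cyl_mem)
    have sepR': "\<forall>z\<in>\<Omega>. \<forall>i j. shiftn i z \<in> cyl \<Omega> [] [a,b] \<longrightarrow> shiftn j z \<in> cyl \<Omega> [] [a,b] \<longrightarrow> i \<noteq> j \<longrightarrow> \<bar>i-j\<bar> \<ge> 3"
      using sepR by blast
    have sepS': "\<forall>z\<in>\<Omega>. \<forall>i j. shiftn i z \<in> cyl \<Omega> [b] cv \<longrightarrow> shiftn j z \<in> cyl \<Omega> [b] cv \<longrightarrow> i \<noteq> j \<longrightarrow> \<bar>i-j\<bar> \<ge> 3"
      using sepS by blast
    note R = sig3[of \<Omega> "cyl \<Omega> [] [a,b]", OF inv sepR']
    note S = sig3[of \<Omega> "cyl \<Omega> [b] cv", OF inv sepS']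
    define A where "A = (\<lambda>j. shiftn j y \<in> cyl \<Omega> [] [a,b])"
    define B where "B = (\<lambda>j. shiftn j y \<in> cyl \<Omega> [b] cv)"
    have Ae: "A j \<longleftrightarrow> y j = a \<and> y (j+1) = b" for j unfolding A_def using sh[OF True] by (simp add: cyl_mem0)
    have Be: "B j \<longleftrightarrow> y (j-1) = b \<and> (\<forall>i<length cv. y (j + int i) = cv!i)" for j
      unfolding B_def using sh[OF True] by (simp add: cyl_mem)
    have sr: "sigma (cyl \<Omega> [] [a,b]) (shiftn m y) = shiftn (gpos A m) y" for m
      unfolding A_def by (rule sigma_shiftn)
    have ss: "sigma (cyl \<Omega> [b] cv) (shiftn m y) = shiftn (gpos B m) y" for m
      unfolding B_def by (rule sigma_shiftn)
    interpret seps A B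
    proof
      fix i j
      show "\<bar>i-j\<bar> \<ge> 5" if "A i" "A j" "i \<noteq> j"
      proof -
        have "\<not> \<bar>i-j\<bar> \<le> 4" using that dist[OF True, of i j] by (auto simp: Ae)
        then show ?thesis by linarith
      qed
      show "\<bar>i-j\<bar> \<ge> 5" if "B i" "B j" "i \<noteq> j"
      proof -
        have "\<not> \<bar>(i-1)-(j-1)\<bar> \<le> 4" using that dist[OF True, of "i-1" "j-1"] by (auto simp: Be)
        then show ?thesis by linarith
      qed
      show "\<bar>j-i-2\<bar> \<ge> 5" if "A i" "B j" "j \<noteq> i+2"
      proof -
        have "\<not> \<bar>(i+1)-(j-1)\<bar> \<le> 4" using that dist[OF True, of "i+1" "j-1"] by (auto simp: Ae Be)
        then show ?thesis by linarith
      qed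
    qed
    have Pe: "(\<lambda>j. shiftn j y \<in> cyl \<Omega> [a] (b#cv)) = Pp"
    proof (rule ext)
      fix j
      show "(shiftn j y \<in> cyl \<Omega> [a] (b#cv)) = Pp j"
        unfolding Pp_def Ae Be cyl_mem match_Cons using sh[OF True, of j]
        by (simp add: algebra_simps)
    qed
    have ry: "sigma (cyl \<Omega> [] [a,b]) y \<in> \<Omega>" using R(1) True by blast
    have "gstar \<Omega> (sigma (cyl \<Omega> [] [a,b])) (sigma (cyl \<Omega> [b] cv)) y =
      sigma (cyl \<Omega> [b] cv) (sigma (cyl \<Omega> [] [a,b]) (sigma (cyl \<Omega> [] [a,b])
        (sigma (cyl \<Omega> [b] cv) (sigma (cyl \<Omega> [b] cv) (sigma (cyl \<Omega> [] [a,b]) y)))))"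
      unfolding gstar_def using True ry S(1) R(3) S(3) by simp
    also have "\<dots> = shiftn (F 0) y"
      using sr[of 0] ss sr by simp
    also have "\<dots> = shiftn (gpos Pp 0) y" by (simp add: comm)
    also have "\<dots> = sigma (cyl \<Omega> [a] (b#cv)) y" using sigma_shiftn[of "cyl \<Omega> [a] (b#cv)" 0 y] Pe by simp
    finally show ?thesis .
  qed
qed

lemma drop_last2: "length w = n \<Longrightarrow> n \<ge> 2 \<Longrightarrow> drop (n-2) w = [w!(n-2), w!(n-1)]"
proof -
  assume h: "length w = n" "n \<ge> 2"
  have "drop (n-2) w = w!(n-2) # drop (Suc (n-2)) w" using h by (simp add: Cons_nth_drop_Suc)
  also have e: "Suc (n-2) = n-1" using h by arith
  also have "drop (n-1) w = w!(n-1) # drop (Suc (n-1)) w"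
    using h Cons_nth_drop_Suc[of "n-1" w] by simp
  also have "drop (Suc (n-1)) w = []" using h by simp
  finally show ?thesis .
qed

lemma nested_eq:
  assumes inv: "shift ` \<Omega> = \<Omega>"
    and dist: "\<And>x p q. x \<in> \<Omega> \<Longrightarrow> x p = x q \<Longrightarrow> \<bar>p-q\<bar> \<le> 4 \<Longrightarrow> p = q"
    and len: "length w \<ge> 4"
  shows "nested_comm \<Omega> w = sigma (cyl \<Omega> [w!0] (drop 1 w))"
proof -
  define n where "n = length w"
  define G where "G = (\<lambda>i acc. gstar \<Omega> (sigma (cyl \<Omega> [] [w ! i, w ! (i + 1)])) acc)"
  define base where "base = sigma (cyl \<Omega> [w ! (n - 3)] [w ! (n - 2), w ! (n - 1)])"
  have "0 \<le> n - 3" by simp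
  then have "foldr G [0..<n-3] base = sigma (cyl \<Omega> [w!0] (drop (0+1) w))"
  proof (induction rule: inc_induct)
    case base
    have e: "n-3+1 = n-2" using len n_def by arith
    have "drop (n-3+1) w = [w!(n-2), w!(n-1)]" unfolding e using drop_last2[of w n] len n_def by simp
    then show ?case by (simp add: base_def)
  next
    case (step j)
    have j2: "j + 2 < n" using step.hyps(2) by simp
    have d1: "drop (j+1) w = w!(j+1) # drop (j+2) w" using j2 n_def Cons_nth_drop_Suc[of "j+1" w] by simp
    have "foldr G [j..<n-3] base = G j (foldr G [Suc j..<n-3] base)"
      using step.hyps(2) by (simp add: upt_conv_Cons)
    also have "\<dots> = gstar \<Omega> (sigma (cyl \<Omega> [] [w ! j, w ! (j + 1)])) (sigma (cyl \<Omega> [w!(j+1)] (drop (j+2) w)))"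
      using step.IH by (simp add: G_def)
    also have "\<dots> = sigma (cyl \<Omega> [w!j] (w!(j+1) # drop (j+2) w))" by (rule key[OF inv dist])
    also have "\<dots> = sigma (cyl \<Omega> [w!j] (drop (j+1) w))" using d1 by simp
    finally show ?case .
  qed
  then show ?thesis unfolding nested_comm_def Let_def G_def base_def n_def by simp
qed

theorem corollary3p7:
  fixes \<Omega> :: "(int \<Rightarrow> 'a::finite) set" and w :: "'a list"
  assumes "minimal_subshift \<Omega>"
    and "\<forall>u\<in>lang \<Omega>. length u = 5 \<longrightarrow> distinct u"
    and "length w \<ge> 4"
  shows "w \<in> lang \<Omega> \<longleftrightarrow> (\<exists>\<omega>\<in>\<Omega>. nested_comm \<Omega> w \<omega> \<noteq> \<omega>)"
proof -
  have inv: "shift ` \<Omega> = \<Omega>" using assms(1) by (simp add: minimal_subshift_def)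
  have dist: "\<And>x p q. x \<in> \<Omega> \<Longrightarrow> x p = x q \<Longrightarrow> \<bar>p-q\<bar> \<le> 4 \<Longrightarrow> p = q"
    using dist_lemma[OF assms(2)] by blast
  define V where "V = cyl \<Omega> [w!0] (drop 1 w)"
  have NE: "nested_comm \<Omega> w = sigma V" unfolding V_def by (rule nested_eq[OF inv dist assms(3)])
  have Vmem: "y \<in> V \<longleftrightarrow> y \<in> \<Omega> \<and> y (-1) = w!0 \<and> (\<forall>i<length w - 1. y (int i) = w!(Suc i))" for y
    using cyl_mem[of 0 y \<Omega> "w!0" "drop 1 w"] by (simp add: V_def)
  show ?thesis
  proof
    assume "w \<in> lang \<Omega>"
    then obtain \<omega> k where om: "\<omega> \<in> \<Omega>" "\<forall>i<length w. \<omega> (k + int i) = w ! i" unfolding lang_def by blast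
    define y where "y = shiftn (k+1) \<omega>"
    have yO: "y \<in> \<Omega>" unfolding y_def by (rule shiftn_in[OF inv om(1)])
    have "y \<in> V" unfolding Vmem
    proof (intro conjI allI impI yO)
      have "w \<noteq> []" using assms(3) by (metis list.size(3) not_numeral_le_zero)
      then show "y (-1) = w!0" using om(2)[rule_format, of 0] by (auto simp: y_def shiftn_def)
      fix i assume "i < length w - 1"
      then show "y (int i) = w!(Suc i)" using om(2)[rule_format, of "Suc i"] by (simp add: y_def shiftn_def algebra_simps)
    qed
    then have "sigma V y = shift y" by (simp add: sigma_def)
    moreover have "shift y \<noteq> y"
    proof
      assume "shift y = y"
      then have "y 1 = y 0" by (metis shift_def add_0)
      then show False using dist[OF yO, of 1 0] by simp
    qed
    ultimately show "\<exists>\<omega>\<in>\<Omega>. nested_comm \<Omega> w \<omega> \<noteq> \<omega>" using yO NE by auto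
  next
    assume "\<exists>\<omega>\<in>\<Omega>. nested_comm \<Omega> w \<omega> \<noteq> \<omega>"
    then obtain y where "sigma V y \<noteq> y" using NE by auto
    then have "V \<noteq> {}" by (auto simp: sigma_def)
    then obtain z where z: "z \<in> V" by blast
    then have zz: "z \<in> \<Omega>" "z (-1) = w!0" "\<forall>i<length w - 1. z (int i) = w!(Suc i)" using Vmem by auto
    have "\<forall>i<length w. z (-1 + int i) = w ! i"
    proof (intro allI impI)
      fix i assume i: "i < length w"
      show "z (-1 + int i) = w ! i"
      proof (cases i)
        case 0 then show ?thesis using zz by simp
      next
        case (Suc m) then show ?thesis using zz(3) i by auto
      qed
    qed
    then show "w \<in> lang \<Omega>" unfolding lang_def using zz(1) by blast
  qed
qed

end
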